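(* Let $\mathfrak{R}_1=(G,G'_1,S,\phi,\rho_1,\delta_1)$ and $\mathfrak{R}_2=(G,G'_2,S,\phi,\rho_2,\delta_2)$ be reconciliations (of the same $G$, $S$, $\phi$) and $x\in V(G)$. Then $\rho_1(x)$ and $\rho_2(x)$ are comparable in $S$ (one is an ancestor of the other).
   Context: All trees are rooted binary trees whose root node has degree 1; every other non-leaf node $x$ has exactly two children $x_l,x_r$. For nodes of a rooted tree, $y\le x$ means $x$ lies on the path from $y$ to the root; two nodes are comparable if one is $\le$ the other. $G$ is a gene tree, $S$ a species tree, $\phi:L(G)\to L(S)$. A tree $G'$ is an extension of $G$ if $G$ is obtained from $G'$ by pruning some subtrees and suppressing degree-2 nodes; $V(G)\subseteq V(G')$. A map $\rho:V(G')\to V(S)$ is consistent with $S$ if $\rho(root(G'))=root(S)$ and every node $x$ of $G'$ with two children satisfies (D) $\rho(x)=\rho(x_l)=\rho(x_r)$ or (S) $\rho(x)_l=\rho(x_l)$ and $\rho(x)_r=\rho(x_r)$. A reconciliation $(G,G',S,\phi,\rho,\delta)$ consists of an extension $G'$ of $G$, a consistent $\rho$ with $\rho|_{L(G)}=\phi$, and an injective partial function $\delta$ from duplications (nodes satisfying (D)) to losses ($L(G')\setminus L(G)$) with $\rho(x)=\rho(\delta(x))$. *)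

theory Defs
  imports Main
begin

text \<open>A rooted tree with node identities: a node set, a root, and an ordered
  list of children for every node (first = left child, second = right child).\<close>

record 'a rtree =
  nodes :: "'a set"
  root :: 'a
  children :: "'a \<Rightarrow> 'a list"

definition edges :: "'a rtree \<Rightarrow> ('a \<times> 'a) set" where
  "edges T = {(c, p). p \<in> nodes T \<and> c \<in> set (children T p)}"

definition tle :: "'a rtree \<Rightarrow> 'a \<Rightarrow> 'a \<Rightarrow> bool" where
  "tle T y x \<longleftrightarrow> y \<in> nodes T \<and> x \<in> nodes T \<and> (y, x) \<in> (edges T)\<^sup>*"

definition comparable :: "'a rtree \<Rightarrow> 'a \<Rightarrow> 'a \<Rightarrow> bool" where
  "comparable T a b \<longleftrightarrow> tle T a b \<or> tle T b a"

definition leaves :: "'a rtree \<Rightarrow> 'a set" where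
  "leaves T = {x \<in> nodes T. children T x = []}"

definition lc :: "'a rtree \<Rightarrow> 'a \<Rightarrow> 'a" where
  "lc T x = children T x ! 0"

definition rc :: "'a rtree \<Rightarrow> 'a \<Rightarrow> 'a" where
  "rc T x = children T x ! 1"

definition rooted_binary_tree :: "'a rtree \<Rightarrow> bool" where
  "rooted_binary_tree T \<longleftrightarrow>
     finite (nodes T) \<and> root T \<in> nodes T \<and>
     (\<forall>x\<in>nodes T. set (children T x) \<subseteq> nodes T) \<and>
     length (children T (root T)) = 1 \<and>
     (\<forall>x\<in>nodes T - {root T}. length (children T x) \<in> {0, 2}) \<and>
     (\<forall>x\<in>nodes T. distinct (children T x)) \<and>
     (\<forall>p\<in>nodes T. root T \<notin> set (children T p)) \<and>
     (\<forall>c p q. (c, p) \<in> edges T \<and> (c, q) \<in> edges T \<longrightarrow> p = q) \<and>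
     (\<forall>x\<in>nodes T. (x, root T) \<in> (edges T)\<^sup>*)"

text \<open>G' is an extension of G: G arises from G' by pruning the subtrees rooted at
  the nodes of some set P, and then suppressing all degree-2 nodes (non-root nodes
  with exactly one remaining child); the nodes keep their identities.\<close>
definition extension :: "'a rtree \<Rightarrow> 'a rtree \<Rightarrow> bool" where
  "extension G' G \<longleftrightarrow>
    (\<exists>P \<subseteq> nodes G'.
       let K = nodes G' - {v. \<exists>p\<in>P. tle G' v p};
           chK = (\<lambda>v. filter (\<lambda>c. c \<in> K) (children G' v))
       in root G' \<in> K \<and>
          nodes G = {v \<in> K. v = root G' \<or> length (chK v) \<noteq> 1} \<and>
          root G = root G' \<and>
          (\<forall>x \<in> nodes G. distinct (children G x) \<and>
             set (children G x) =
               {c \<in> nodes G. c \<noteq> x \<and> tle G' c x \<and>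
                  (\<forall>w\<in>nodes G. tle G' c w \<and> tle G' w x \<longrightarrow> w = c \<or> w = x)}))"

definition is_dup :: "'a rtree \<Rightarrow> 'b rtree \<Rightarrow> ('a \<Rightarrow> 'b) \<Rightarrow> 'a \<Rightarrow> bool" where
  "is_dup G' S \<rho> x \<longleftrightarrow> x \<in> nodes G' \<and> length (children G' x) = 2 \<and>
     \<rho> x = \<rho> (lc G' x) \<and> \<rho> x = \<rho> (rc G' x)"

definition is_spec :: "'a rtree \<Rightarrow> 'b rtree \<Rightarrow> ('a \<Rightarrow> 'b) \<Rightarrow> 'a \<Rightarrow> bool" where
  "is_spec G' S \<rho> x \<longleftrightarrow> x \<in> nodes G' \<and> length (children G' x) = 2 \<and>
     length (children S (\<rho> x)) = 2 \<and>
     lc S (\<rho> x) = \<rho> (lc G' x) \<and> rc S (\<rho> x) = \<rho> (rc G' x)"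

definition consistent :: "'a rtree \<Rightarrow> 'b rtree \<Rightarrow> ('a \<Rightarrow> 'b) \<Rightarrow> bool" where
  "consistent G' S \<rho> \<longleftrightarrow>
     (\<forall>x\<in>nodes G'. \<rho> x \<in> nodes S) \<and>
     \<rho> (root G') = root S \<and>
     (\<forall>x\<in>nodes G'. length (children G' x) = 2 \<longrightarrow> is_dup G' S \<rho> x \<or> is_spec G' S \<rho> x)"

text \<open>Reconciliation (G, G', S, phi, rho, delta); delta is an injective partial
  function from duplications to losses.\<close>
definition reconciliation ::
  "'a rtree \<Rightarrow> 'a rtree \<Rightarrow> 'b rtree \<Rightarrow> ('a \<Rightarrow> 'b) \<Rightarrow> ('a \<Rightarrow> 'b) \<Rightarrow> ('a \<Rightarrow> 'a option) \<Rightarrow> bool" where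
  "reconciliation G G' S \<phi> \<rho> \<delta> \<longleftrightarrow>
     rooted_binary_tree G' \<and> extension G' G \<and> consistent G' S \<rho> \<and>
     (\<forall>l\<in>leaves G. \<rho> l = \<phi> l) \<and>
     dom \<delta> \<subseteq> {x. is_dup G' S \<rho> x} \<and>
     ran \<delta> \<subseteq> leaves G' - leaves G \<and>
     inj_on \<delta> (dom \<delta>) \<and>
     (\<forall>x\<in>dom \<delta>. \<rho> x = \<rho> (the (\<delta> x)))"

end

theory Submission
  imports Defs
begin

lemma sv_edges:
  assumes "rooted_binary_tree T" shows "single_valued (edges T)"
  using assms unfolding rooted_binary_tree_def by (auto intro: single_valuedI)

lemma cyc_aux:
  assumes sv: "single_valued E" and c: "(y,y) \<in> E\<^sup>+" and r: "(y,z) \<in> E\<^sup>*"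
  shows "(z,y) \<in> E\<^sup>+"
  using r
proof (induction rule: rtrancl_induct)
  case base then show ?case using c by simp
next
  case (step z w)
  from step.IH obtain z2 where "(z,z2) \<in> E" "(z2,y) \<in> E\<^sup>*" by (meson tranclD)
  with step.hyps(2) sv have "w = z2" by (simp add: single_valuedD)
  with \<open>(z2,y) \<in> E\<^sup>*\<close> c show ?case by (simp add: rtrancl_trancl_trancl)
qed

lemma acyc_edges:
  assumes T: "rooted_binary_tree T" shows "acyclic (edges T)"
proof (rule acyclicI, rule allI, rule notI)
  fix y assume c: "(y,y) \<in> (edges T)\<^sup>+"
  then have "y \<in> nodes T" by (induct rule: trancl.induct) (auto simp: edges_def)
  with T have "(y, root T) \<in> (edges T)\<^sup>*" unfolding rooted_binary_tree_def by blast
  with cyc_aux[OF sv_edges[OF T] c] have "(root T, y) \<in> (edges T)\<^sup>+" by blast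
  then obtain w where "(root T, w) \<in> edges T" by (meson tranclD)
  with T show False unfolding rooted_binary_tree_def edges_def by auto
qed

lemma finite_edges:
  assumes T: "rooted_binary_tree T" shows "finite (edges T)"
proof -
  have "edges T \<subseteq> nodes T \<times> nodes T" using T unfolding rooted_binary_tree_def edges_def by auto
  moreover have "finite (nodes T \<times> nodes T)" using T unfolding rooted_binary_tree_def by auto
  ultimately show ?thesis by (rule finite_subset)
qed

lemma leaf_below:
  assumes T: "rooted_binary_tree T" and x: "x \<in> nodes T"
  shows "\<exists>l \<in> leaves T. (l, x) \<in> (edges T)\<^sup>*"
proof -
  have wf: "wf (edges T)" using finite_acyclic_wf[OF finite_edges[OF T] acyc_edges[OF T]] .
  let ?D = "{y. (y,x) \<in> (edges T)\<^sup>*}"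
  have "x \<in> ?D" by simp
  then obtain y where yD: "y \<in> ?D" and min: "\<And>c. (c,y) \<in> edges T \<Longrightarrow> c \<notin> ?D"
    using wfE_min[OF wf] by metis
  have yx: "(y,x) \<in> (edges T)\<^sup>*" using yD by simp
  have yn: "y \<in> nodes T" using yx x T unfolding rooted_binary_tree_def
    by (induct rule: converse_rtrancl_induct) (auto simp: edges_def)
  have "children T y = []"
  proof (rule ccontr)
    assume "children T y \<noteq> []"
    then obtain c where "c \<in> set (children T y)" by (cases "children T y") auto
    with yn have "(c,y) \<in> edges T" by (simp add: edges_def)
    with min yD show False by (meson converse_rtrancl_into_rtrancl mem_Collect_eq)
  qed
  with yn yD show ?thesis by (auto simp: leaves_def)
qed

lemma ext_edges:
  assumes "extension G' G" and "(c,p) \<in> edges G"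
  shows "(c,p) \<in> (edges G')\<^sup>*"
  using assms unfolding extension_def Let_def edges_def tle_def by auto

lemma ext_nodes:
  assumes "extension G' G" shows "nodes G \<subseteq> nodes G'"
  using assms unfolding extension_def Let_def by auto

lemma rho_edge:
  assumes T: "rooted_binary_tree G'" and S: "rooted_binary_tree S"
    and cons: "consistent G' S \<rho>" and e: "(c,p) \<in> edges G'"
  shows "(\<rho> c, \<rho> p) \<in> (edges S)\<^sup>*"
proof -
  have p: "p \<in> nodes G'" and cp: "c \<in> set (children G' p)" using e by (auto simp: edges_def)
  have cn: "c \<in> nodes G'" using T p cp unfolding rooted_binary_tree_def by auto
  have rcS: "\<rho> c \<in> nodes S" using cons cn unfolding consistent_def by auto
  have rpS: "\<rho> p \<in> nodes S" using cons p unfolding consistent_def by auto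
  show ?thesis
  proof (cases "p = root G'")
    case True
    then have "\<rho> p = root S" using cons unfolding consistent_def by auto
    with S rcS show ?thesis unfolding rooted_binary_tree_def by auto
  next
    case False
    have "length (children G' p) \<in> {0,2}" using T p False unfolding rooted_binary_tree_def by blast
    moreover have "children G' p \<noteq> []" using cp by auto
    ultimately have l2: "length (children G' p) = 2" by auto
    then obtain a b where ab: "children G' p = [a,b]"
      by (cases "children G' p"; cases "tl (children G' p)") auto
    have cab: "c = lc G' p \<or> c = rc G' p" using ab cp by (auto simp: lc_def rc_def)
    from cons p l2 have "is_dup G' S \<rho> p \<or> is_spec G' S \<rho> p" unfolding consistent_def by auto
    then show ?thesis
    proof
      assume "is_dup G' S \<rho> p" then show ?thesis using cab unfolding is_dup_def by auto
    next
      assume sp: "is_spec G' S \<rho> p"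
      then have "length (children S (\<rho> p)) = 2" unfolding is_spec_def by auto
      then have "lc S (\<rho> p) \<in> set (children S (\<rho> p))" "rc S (\<rho> p) \<in> set (children S (\<rho> p))"
        unfolding lc_def rc_def by auto
      with rpS have "(lc S (\<rho> p), \<rho> p) \<in> edges S" "(rc S (\<rho> p), \<rho> p) \<in> edges S"
        by (auto simp: edges_def)
      with sp cab show ?thesis unfolding is_spec_def by auto
    qed
  qed
qed

lemma rho_mono:
  assumes T: "rooted_binary_tree G'" and S: "rooted_binary_tree S"
    and cons: "consistent G' S \<rho>" and e: "(c,p) \<in> (edges G')\<^sup>*"
  shows "(\<rho> c, \<rho> p) \<in> (edges S)\<^sup>*"
  using e
proof (induction rule: rtrancl_induct)
  case base then show ?case by simp
next
  case (step y z) then show ?case using rho_edge[OF T S cons step.hyps(2)] by (meson rtrancl_trans)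
qed

lemma ext_mono:
  assumes "extension G' G" and "(c,p) \<in> (edges G)\<^sup>*"
  shows "(c,p) \<in> (edges G')\<^sup>*"
  using assms(2)
proof (induction rule: rtrancl_induct)
  case base then show ?case by simp
next
  case (step y z) then show ?case using ext_edges[OF assms(1) step.hyps(2)] by (meson rtrancl_trans)
qed

theorem lemma5:
  assumes "rooted_binary_tree G" and "rooted_binary_tree S"
    and "\<forall>l\<in>leaves G. \<phi> l \<in> leaves S"
    and "reconciliation G G1' S \<phi> \<rho>1 \<delta>1"
    and "reconciliation G G2' S \<phi> \<rho>2 \<delta>2"
    and "x \<in> nodes G"
  shows "comparable S (\<rho>1 x) (\<rho>2 x)"
proof -
  obtain l where l: "l \<in> leaves G" and lx: "(l,x) \<in> (edges G)\<^sup>*"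
    using leaf_below[OF assms(1) assms(6)] by blast
  have R1: "rooted_binary_tree G1'" "extension G1' G" "consistent G1' S \<rho>1" "\<rho>1 l = \<phi> l"
    using assms(4) l unfolding reconciliation_def by auto
  have R2: "rooted_binary_tree G2'" "extension G2' G" "consistent G2' S \<rho>2" "\<rho>2 l = \<phi> l"
    using assms(5) l unfolding reconciliation_def by auto
  have a1: "(\<phi> l, \<rho>1 x) \<in> (edges S)\<^sup>*"
    using rho_mono[OF R1(1) assms(2) R1(3) ext_mono[OF R1(2) lx]] R1(4) by simp
  have a2: "(\<phi> l, \<rho>2 x) \<in> (edges S)\<^sup>*"
    using rho_mono[OF R2(1) assms(2) R2(3) ext_mono[OF R2(2) lx]] R2(4) by simp
  have n1: "\<rho>1 x \<in> nodes S" using R1(2,3) assms(6) ext_nodes unfolding consistent_def by blast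
  have n2: "\<rho>2 x \<in> nodes S" using R2(2,3) assms(6) ext_nodes unfolding consistent_def by blast
  from single_valued_confluent[OF sv_edges[OF assms(2)] a1 a2]
  show ?thesis using n1 n2 unfolding comparable_def tle_def by blast
qed

end
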